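(* Let $m\in\mathbb{N}$, $T>0$. Let $\varphi:\mathbb{R}\to\mathbb{R}$ be continuous and globally bounded, i.e. there is $L_1>0$ with $|\varphi(s)|\le L_1$ for all $s\in\mathbb{R}$. Fix $a,b_1,\ldots,b_m\in\mathbb{R}$ and, for $u=(u^1,\ldots,u^m)\in(\mathcal{L}^2([0,T];\mathbb{R}))^m$, define $\pi(u):[0,T]\to\mathbb{R}$ by \[ \pi(u)(t):=a+\sum_{j=1}^m b_j\int_0^t\Big(\int_0^r u^j(s)\,ds\Big)dr . \] For $j\in\{1,\ldots,m\}$ and $r,t\in[0,T]$, define $\eta^{\varphi}_j(\cdot,r),\rho^{\varphi}_j(\cdot,t):(\mathcal{L}^2([0,T];\mathbb{R}))^m\to\mathbb{R}$ by \[ \eta^{\varphi}_j(u,r):=\int_0^r u^j(s)\,\varphi(\pi(u)(s))\,ds,\qquad \rho^{\varphi}_j(u,t):=\int_0^t\eta^{\varphi}_j(u,r)\,dr . \] If $\{u_k\}\subset(\mathcal{L}^2([0,T];\mathbb{R}))^m$ converges weakly to $u$, then $\lim_{k\to\infty}\eta^{\varphi}_j(u_k,r)=\eta^{\varphi}_j(u,r)$ for every $r\in[0,T]$ and $\lim_{k\to\infty}\rho^{\varphi}_j(u_k,t)=\rho^{\varphi}_j(u,t)$ for every $t\in[0,T]$, for each $j=1,\ldots,m$. That is, $\eta^{\varphi}_j(\cdot,r)$ and $\rho^{\varphi}_j(\cdot,t)$ are weakly sequentially continuous for every $r,t\in[0,T]$.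
   Context: $\mathcal{L}^2([0,T];\mathbb{R})$ denotes the Hilbert space of (classes of) Lebesgue measurable square-integrable real functions on $[0,T]$; weak convergence refers to the weak topology of the product space $(\mathcal{L}^2([0,T];\mathbb{R}))^m$. *)

theory Defs
  imports "HOL-Analysis.Analysis"
begin

definition L2 :: "real \<Rightarrow> (real \<Rightarrow> real) \<Rightarrow> bool" where
  "L2 T f \<longleftrightarrow> set_borel_measurable lebesgue {0..T} f
      \<and> set_integrable lebesgue {0..T} (\<lambda>s. (f s)^2)"

definition L2m :: "nat \<Rightarrow> real \<Rightarrow> (nat \<Rightarrow> real \<Rightarrow> real) \<Rightarrow> bool" where
  "L2m m T u \<longleftrightarrow> (\<forall>j\<in>{1..m}. L2 T (u j))"

definition weak_conv_L2m ::
  "nat \<Rightarrow> real \<Rightarrow> (nat \<Rightarrow> nat \<Rightarrow> real \<Rightarrow> real) \<Rightarrow> (nat \<Rightarrow> real \<Rightarrow> real) \<Rightarrow> bool" where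
  "weak_conv_L2m m T U u \<longleftrightarrow>
     (\<forall>j\<in>{1..m}. \<forall>g. L2 T g \<longrightarrow>
        (\<lambda>k. LINT s:{0..T}|lebesgue. U k j s * g s) \<longlonglongrightarrow> (LINT s:{0..T}|lebesgue. u j s * g s))"

definition piu :: "real \<Rightarrow> (nat \<Rightarrow> real) \<Rightarrow> nat \<Rightarrow> (nat \<Rightarrow> real \<Rightarrow> real) \<Rightarrow> real \<Rightarrow> real" where
  "piu a b m u t = a + (\<Sum>j=1..m. b j *
      (LINT r:{0..t}|lebesgue. (LINT s:{0..r}|lebesgue. u j s)))"

definition eta :: "(real \<Rightarrow> real) \<Rightarrow> real \<Rightarrow> (nat \<Rightarrow> real) \<Rightarrow> nat \<Rightarrow> nat
    \<Rightarrow> (nat \<Rightarrow> real \<Rightarrow> real) \<Rightarrow> real \<Rightarrow> real" where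
  "eta \<phi> a b m j u r = (LINT s:{0..r}|lebesgue. u j s * \<phi> (piu a b m u s))"

definition rho :: "(real \<Rightarrow> real) \<Rightarrow> real \<Rightarrow> (nat \<Rightarrow> real) \<Rightarrow> nat \<Rightarrow> nat
    \<Rightarrow> (nat \<Rightarrow> real \<Rightarrow> real) \<Rightarrow> real \<Rightarrow> real" where
  "rho \<phi> a b m j u t = (LINT r:{0..t}|lebesgue. eta \<phi> a b m j u r)"

end

theory Submission
  imports Defs
begin

lemma sbm_iff:
  fixes f :: "real \<Rightarrow> real"
  shows "set_borel_measurable lebesgue {0..T} f \<longleftrightarrow> f \<in> borel_measurable (lebesgue_on {0..T})"
  unfolding set_borel_measurable_def
  by (subst borel_measurable_restrict_space_iff) auto

lemma abs_le_1sq: "\<bar>x::real\<bar> \<le> 1 + x^2"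
proof -
  have "0 \<le> (\<bar>x\<bar> - 1)^2" by simp
  then have "0 \<le> x^2 - 2*\<bar>x\<bar> + 1" by (simp add: power2_eq_square algebra_simps)
  then show ?thesis by (smt (verit) zero_le_power2)
qed

lemma L2_D:
  assumes "L2 T f"
  shows "f \<in> borel_measurable (lebesgue_on {0..T})" "f absolutely_integrable_on {0..T}"
proof -
  show m: "f \<in> borel_measurable (lebesgue_on {0..T})" using assms sbm_iff unfolding L2_def by blast
  have i: "(\<lambda>s. (f s)^2) absolutely_integrable_on {0..T}" using assms unfolding L2_def by blast
  have "(\<lambda>s. 1 + (f s)^2) integrable_on {0..T}"
    by (intro integrable_add integrable_on_const set_lebesgue_integral_eq_integral(1)[OF i]) auto
  then show "f absolutely_integrable_on {0..T}"
    apply (rule measurable_bounded_by_integrable_imp_absolutely_integrable[OF m, rotated])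
    using abs_le_1sq by auto
qed

lemma L2_I:
  fixes g :: "real \<Rightarrow> real"
  assumes m: "g \<in> borel_measurable (lebesgue_on {0..T})" and b: "\<And>s. s \<in> {0..T} \<Longrightarrow> \<bar>g s\<bar> \<le> M"
  shows "L2 T g"
  unfolding L2_def
proof
  show "set_borel_measurable lebesgue {0..T} g" using m sbm_iff by blast
  have "(\<lambda>s. g s * g s) absolutely_integrable_on {0..T}"
  proof (rule absolutely_integrable_bounded_measurable_product_real[OF m])
    show "bounded (g ` {0..T})" using b unfolding bounded_iff by (metis imageE real_norm_def)
    show "g absolutely_integrable_on {0..T}"
      apply (rule measurable_bounded_by_integrable_imp_absolutely_integrable[OF m, where g="\<lambda>_. M"])
      using b by (auto intro!: integrable_on_const)
  qed auto
  then show "(\<lambda>s. (g s)^2) absolutely_integrable_on {0..T}" by (simp add: power2_eq_square)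
qed

lemma prod_ai:
  fixes y g :: "real \<Rightarrow> real"
  assumes y: "y absolutely_integrable_on {a..b}"
    and g: "g \<in> borel_measurable (lebesgue_on {a..b})" and gb: "\<And>s. s \<in> {a..b} \<Longrightarrow> \<bar>g s\<bar> \<le> M"
  shows "(\<lambda>s. y s * g s) absolutely_integrable_on {a..b}"
    "(\<lambda>s. y s * g s) integrable_on {a..b}"
    "\<bar>integral {a..b} (\<lambda>s. y s * g s)\<bar> \<le> M * integral {a..b} (\<lambda>s. \<bar>y s\<bar>)"
proof -
  have bg: "bounded (g ` {a..b})" unfolding bounded_iff
    by (intro exI[of _ M]) (auto simp: gb)
  have "(\<lambda>s. g s * y s) absolutely_integrable_on {a..b}"
    by (rule absolutely_integrable_bounded_measurable_product_real[OF g _ bg y]) simp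
  then show ai: "(\<lambda>s. y s * g s) absolutely_integrable_on {a..b}" by (simp add: mult.commute)
  show ii: "(\<lambda>s. y s * g s) integrable_on {a..b}" by (rule set_lebesgue_integral_eq_integral(1)[OF ai])
  have ya: "(\<lambda>s. \<bar>y s\<bar>) integrable_on {a..b}"
    using conjunct2[OF absolutely_integrable_on_def[THEN iffD1, OF y]] by simp
  have "norm (integral {a..b} (\<lambda>s. y s * g s)) \<le> integral {a..b} (\<lambda>s. M * \<bar>y s\<bar>)"
  proof (rule integral_norm_bound_integral[OF ii])
    show "(\<lambda>s. M * \<bar>y s\<bar>) integrable_on {a..b}" by (rule integrable_on_mult_right[OF ya])
    fix s assume "s \<in> {a..b}"
    then have "\<bar>g s\<bar> \<le> M" by (rule gb)
    then have "\<bar>g s\<bar> * \<bar>y s\<bar> \<le> M * \<bar>y s\<bar>" by (rule mult_right_mono) simp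
    then show "norm (y s * g s) \<le> M * \<bar>y s\<bar>" by (simp add: abs_mult mult.commute)
  qed
  then show "\<bar>integral {a..b} (\<lambda>s. y s * g s)\<bar> \<le> M * integral {a..b} (\<lambda>s. \<bar>y s\<bar>)"
    by simp
qed

lemma weak_lim:
  assumes "L2m m T u" "\<And>k. L2m m T (U k)" "weak_conv_L2m m T U u" "j \<in> {1..m}"
    and g: "g \<in> borel_measurable (lebesgue_on {0..T})" and gb: "\<And>s. s \<in> {0..T} \<Longrightarrow> \<bar>g s\<bar> \<le> M"
  shows "(\<lambda>k. integral {0..T} (\<lambda>s. U k j s * g s)) \<longlonglongrightarrow> integral {0..T} (\<lambda>s. u j s * g s)"
proof -
  have L: "L2 T g" using L2_I[OF g gb] .
  have *: "(\<lambda>k. LINT s:{0..T}|lebesgue. U k j s * g s) \<longlonglongrightarrow> (LINT s:{0..T}|lebesgue. u j s * g s)"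
    using assms(3) unfolding weak_conv_L2m_def using assms(4) L by simp
  have Uj: "L2 T (U k j)" for k using assms(2)[of k] assms(4) unfolding L2m_def by simp
  have uj: "L2 T (u j)" using assms(1) assms(4) unfolding L2m_def by simp
  have e1: "(LINT s:{0..T}|lebesgue. U k j s * g s) = integral {0..T} (\<lambda>s. U k j s * g s)" for k
    by (rule set_lebesgue_integral_eq_integral(2)[OF prod_ai(1)[OF L2_D(2)[OF Uj] g gb]])
  have e2: "(LINT s:{0..T}|lebesgue. u j s * g s) = integral {0..T} (\<lambda>s. u j s * g s)"
    by (rule set_lebesgue_integral_eq_integral(2)[OF prod_ai(1)[OF L2_D(2)[OF uj] g gb]])
  show ?thesis using * unfolding e1 e2 .
qed

primrec hump :: "(nat \<Rightarrow> (real \<Rightarrow> real) \<Rightarrow> real) \<Rightarrow> (nat \<Rightarrow> real \<Rightarrow> real) \<Rightarrow> nat \<Rightarrow> real \<Rightarrow> real" where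
  "hump F sg 0 = (\<lambda>s. 0)"
| "hump F sg (Suc n) = (\<lambda>s. hump F sg n s + (if F n (hump F sg n) \<ge> 0 then 1 else -1) * (1/3)^n * sg n s)"

lemma geo_tail: "(\<Sum>i. (1/3::real)^(i + k)) = (1/3)^k * (3/2)"
proof -
  have "(\<Sum>i. (1/3::real)^(i + k)) = (\<Sum>i. (1/3)^k * (1/3::real)^i)"
    by (simp only: power_add mult.commute)
  also have "\<dots> = (1/3)^k * (\<Sum>i. (1/3::real)^i)"
    by (rule suminf_mult) (rule summable_geometric, simp)
  also have "(\<Sum>i. (1/3::real)^i) = 1 / (1 - 1/3)" by (rule suminf_geometric) simp
  also have "(1::real) / (1 - 1/3) = 3/2" by simp
  finally show ?thesis .
qed

lemma ubp:
  fixes x :: "nat \<Rightarrow> real \<Rightarrow> real"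
  assumes x: "\<And>k. x k absolutely_integrable_on {a..b}"
    and bd: "\<And>g M. g \<in> borel_measurable (lebesgue_on {a..b}) \<Longrightarrow> (\<And>s. s \<in> {a..b} \<Longrightarrow> \<bar>g s\<bar> \<le> M)
       \<Longrightarrow> \<exists>C. \<forall>k. \<bar>integral {a..b} (\<lambda>s. x k s * g s)\<bar> \<le> C"
  shows "\<exists>B. \<forall>k. integral {a..b} (\<lambda>s. \<bar>x k s\<bar>) \<le> B"
proof (rule ccontr)
  assume A: "\<not> ?thesis"
  have ex: "\<exists>k. integral {a..b} (\<lambda>s. \<bar>x k s\<bar>) > 2 * 3^n * real n" for n::nat
  proof (rule ccontr)
    assume "\<not> (\<exists>k. integral {a..b} (\<lambda>s. \<bar>x k s\<bar>) > 2 * 3^n * real n)"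
    then have "\<forall>k. integral {a..b} (\<lambda>s. \<bar>x k s\<bar>) \<le> 2 * 3^n * real n" by (simp add: not_less)
    then have "\<exists>B. \<forall>k. integral {a..b} (\<lambda>s. \<bar>x k s\<bar>) \<le> B" by (rule exI)
    with A show False by contradiction
  qed
  have "\<exists>kk. \<forall>n. integral {a..b} (\<lambda>s. \<bar>x (kk n) s\<bar>) > 2 * 3^n * real n"
    by (rule choice, rule allI, rule ex)
  then obtain kk where kk: "\<And>n. integral {a..b} (\<lambda>s. \<bar>x (kk n) s\<bar>) > 2 * 3^n * real n" by blast
  define y where "y n = x (kk n)" for n
  define N where "N n = integral {a..b} (\<lambda>s. \<bar>y n s\<bar>)" for n
  define sg where "sg n s = sgn (y n s)" for n s
  define F where "F n G = integral {a..b} (\<lambda>s. y n s * G s)" for n G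
  define H where "H = hump F sg"
  define c where "c n = (if F n (H n) \<ge> 0 then 1 else -1::real)" for n
  have Hs: "H (Suc n) s = H n s + c n * (1/3)^n * sg n s" for n s
    by (simp add: H_def c_def)
  have H0: "H 0 s = 0" for s by (simp add: H_def)
  have Hsum: "H n s = (\<Sum>i<n. c i * (1/3)^i * sg i s)" for n s
    by (induction n) (simp_all add: H0 Hs)
  have yai: "y n absolutely_integrable_on {a..b}" for n using x y_def by simp
  have ym: "y n \<in> borel_measurable (lebesgue_on {a..b})" for n
    using yai by (simp add: absolutely_integrable_measurable)
  have sgm: "sg n \<in> borel_measurable (lebesgue_on {a..b})" for n
    unfolding sg_def using measurable_compose[OF ym borel_measurable_sgn] by simp
  have sgb: "\<bar>sg n s\<bar> \<le> 1" for n s by (simp add: sg_def sgn_real_def)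
  have cabs: "\<bar>c n\<bar> = 1" for n by (simp add: c_def)
  have tb: "\<bar>c i * (1/3)^i * sg i s\<bar> \<le> (1/3::real)^i" for i s
  proof -
    have "\<bar>c i * (1/3)^i * sg i s\<bar> = (1/3)^i * \<bar>sg i s\<bar>" by (simp add: abs_mult cabs)
    also have "\<dots> \<le> (1/3)^i * 1" by (rule mult_left_mono[OF sgb]) simp
    finally show ?thesis by simp
  qed
  have geo: "summable (\<lambda>i. (1/3::real)^i)" by (rule summable_geometric) simp
  have summa: "summable (\<lambda>i. \<bar>c i * (1/3)^i * sg i s\<bar>)" for s
  proof (rule summable_comparison_test'[OF geo])
    fix i :: nat show "norm \<bar>c i * (1/3)^i * sg i s\<bar> \<le> (1/3::real)^i" using tb[of i s] by simp
  qed
  have summ: "summable (\<lambda>i. c i * (1/3)^i * sg i s)" for s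
  proof (rule summable_comparison_test'[OF geo])
    fix i :: nat show "norm (c i * (1/3)^i * sg i s) \<le> (1/3::real)^i" using tb[of i s] by simp
  qed
  define h where "h s = (\<Sum>i. c i * (1/3)^i * sg i s)" for s
  have hm: "h \<in> borel_measurable (lebesgue_on {a..b})"
  proof -
    have "(\<lambda>s. c i * (1/3)^i * sg i s) \<in> borel_measurable (lebesgue_on {a..b})" for i
      using borel_measurable_times[OF borel_measurable_const sgm[of i], of "c i * (1/3)^i"] by simp
    then show ?thesis unfolding h_def by (rule borel_measurable_suminf)
  qed
  have tail: "\<bar>h s - H (Suc n) s\<bar> \<le> (1/3)^n / 2" for n s
  proof -
    define f where "f i = c i * (1/3)^i * sg i s" for i
    have sf: "summable f" unfolding f_def by (rule summ)
    have saf: "summable (\<lambda>i. \<bar>f i\<bar>)" unfolding f_def by (rule summa)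
    have fb: "\<bar>f i\<bar> \<le> (1/3)^i" for i unfolding f_def by (rule tb)
    have e1: "h s = (\<Sum>i. f (i + Suc n)) + (\<Sum>i<Suc n. f i)"
    proof -
      have e0: "h s = suminf f" unfolding h_def f_def by (rule refl)
      show ?thesis using suminf_split_initial_segment[OF sf, of "Suc n"] unfolding e0 .
    qed
    have e2: "H (Suc n) s = (\<Sum>i<Suc n. f i)" by (simp only: Hsum f_def)
    have "\<bar>h s - H (Suc n) s\<bar> = \<bar>\<Sum>i. f (i + Suc n)\<bar>" using e1 e2 by simp
    also have "\<dots> \<le> (\<Sum>i. \<bar>f (i + Suc n)\<bar>)"
      using summable_rabs[OF summable_ignore_initial_segment[OF saf, of "Suc n"]] by simp
    also have "\<dots> \<le> (\<Sum>i. (1/3::real)^(i + Suc n))"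
    proof (rule suminf_le)
      show "\<And>i. \<bar>f (i + Suc n)\<bar> \<le> (1/3::real)^(i + Suc n)" by (rule fb)
      show "summable (\<lambda>i. \<bar>f (i + Suc n)\<bar>)" by (rule summable_ignore_initial_segment[OF saf])
      show "summable (\<lambda>i. (1/3::real)^(i + Suc n))" by (rule summable_ignore_initial_segment[OF geo])
    qed
    also have "\<dots> = (1/3)^n / 2" unfolding geo_tail by simp
    finally show ?thesis .
  qed
  have hb: "\<bar>h s\<bar> \<le> 2" for s
  proof -
    have "\<bar>H (Suc 0) s\<bar> \<le> 1" using tb[of 0 s] by (simp add: Hs H0)
    moreover have "\<bar>h s - H (Suc 0) s\<bar> \<le> 1/2" using tail[where n=0 and s=s] by simp
    moreover have "\<bar>h s\<bar> \<le> \<bar>h s - H (Suc 0) s\<bar> + \<bar>H (Suc 0) s\<bar>"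
      using abs_triangle_ineq[of "h s - H (Suc 0) s" "H (Suc 0) s"] by simp
    ultimately show ?thesis by linarith
  qed
  have Hb: "\<bar>H n s\<bar> \<le> 4" for n s
  proof (cases n)
    case 0 then show ?thesis by (simp add: H0)
  next
    case (Suc n')
    have "(1/3::real)^n' \<le> 1" by (rule power_le_one) auto
    moreover have "\<bar>H (Suc n') s\<bar> \<le> \<bar>h s - H (Suc n') s\<bar> + \<bar>h s\<bar>"
      using abs_triangle_ineq[of "h s - H (Suc n') s" "h s"] by (simp add: abs_minus_commute)
    ultimately show ?thesis using tail[where n=n' and s=s] hb[of s] Suc by simp
  qed
  have Hm: "H n \<in> borel_measurable (lebesgue_on {a..b})" for n
  proof -
    have "(\<lambda>s. \<Sum>i<n. c i * (1/3)^i * sg i s) \<in> borel_measurable (lebesgue_on {a..b})"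
      by (intro borel_measurable_sum borel_measurable_times borel_measurable_const sgm)
    moreover have "H n = (\<lambda>s. \<Sum>i<n. c i * (1/3)^i * sg i s)" using Hsum by auto
    ultimately show ?thesis by simp
  qed
  have ysg: "y n s * sg n s = \<bar>y n s\<bar>" for n s by (simp add: sg_def sgn_real_def)
  have key1: "F n (H (Suc n)) = F n (H n) + c n * (1/3)^n * N n" for n
  proof -
    have i1: "(\<lambda>s. y n s * H n s) integrable_on {a..b}" by (rule prod_ai(2)[OF yai Hm Hb])
    have i2: "(\<lambda>s. y n s * sg n s) integrable_on {a..b}" by (rule prod_ai(2)[OF yai sgm sgb])
    have "F n (H (Suc n)) = integral {a..b} (\<lambda>s. y n s * H n s + (c n * (1/3)^n) * (y n s * sg n s))"
      unfolding F_def Hs by (simp add: algebra_simps)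
    also have "\<dots> = F n (H n) + (c n * (1/3)^n) * integral {a..b} (\<lambda>s. y n s * sg n s)"
      unfolding F_def by (subst integral_add[OF i1 integrable_on_mult_right[OF i2]]) simp
    also have "integral {a..b} (\<lambda>s. y n s * sg n s) = N n" unfolding N_def ysg ..
    finally show ?thesis by simp
  qed
  have key2: "F n h = F n (H (Suc n)) + F n (\<lambda>s. h s - H (Suc n) s)" for n
  proof -
    have i1: "(\<lambda>s. y n s * H (Suc n) s) integrable_on {a..b}" by (rule prod_ai(2)[OF yai Hm Hb])
    have dm: "(\<lambda>s. h s - H (Suc n) s) \<in> borel_measurable (lebesgue_on {a..b})"
      using borel_measurable_diff[OF hm Hm] by simp
    have i2: "(\<lambda>s. y n s * (h s - H (Suc n) s)) integrable_on {a..b}" by (rule prod_ai(2)[OF yai dm tail])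
    have "F n h = integral {a..b} (\<lambda>s. y n s * H (Suc n) s + y n s * (h s - H (Suc n) s))"
      unfolding F_def by (simp add: algebra_simps)
    then show ?thesis unfolding F_def using i1 i2 by (simp add: integral_add)
  qed
  have key3: "\<bar>F n (\<lambda>s. h s - H (Suc n) s)\<bar> \<le> (1/3)^n / 2 * N n" for n
  proof -
    have dm: "(\<lambda>s. h s - H (Suc n) s) \<in> borel_measurable (lebesgue_on {a..b})"
      using borel_measurable_diff[OF hm Hm] by simp
    show ?thesis unfolding F_def N_def by (rule prod_ai(3)[OF yai dm tail])
  qed
  have Nnn: "N n \<ge> 0" for n
  proof -
    have ya: "(\<lambda>s. \<bar>y n s\<bar>) integrable_on {a..b}" using yai[of n] unfolding absolutely_integrable_on_def by simp
    then show ?thesis unfolding N_def by (rule integral_nonneg) simp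
  qed
  have key4: "\<bar>F n (H n) + c n * (1/3)^n * N n\<bar> \<ge> (1/3)^n * N n" for n
  proof -
    have B: "(1/3::real)^n * N n \<ge> 0" using Nnn[of n] by simp
    show ?thesis
    proof (cases "F n (H n) \<ge> 0")
      case True
      then have e: "F n (H n) + c n * (1/3)^n * N n = F n (H n) + (1/3)^n * N n" by (simp add: c_def)
      show ?thesis unfolding e by (subst abs_of_nonneg; use True B in linarith)
    next
      case False
      then have e: "F n (H n) + c n * (1/3)^n * N n = F n (H n) - (1/3)^n * N n" by (simp add: c_def)
      show ?thesis unfolding e by (subst abs_of_nonpos; use False B in linarith)
    qed
  qed
  have big: "\<bar>F n h\<bar> > real n" for n
  proof -
    have "\<bar>F n h\<bar> \<ge> (1/3)^n * N n / 2" using key1[of n] key2[of n] key3[of n] key4[of n] by linarith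
    moreover have "(1/3::real)^n * N n / 2 > (1/3)^n * (2 * 3^n * real n) / 2"
      using kk[of n] unfolding N_def y_def by (simp add: divide_strict_right_mono)
    moreover have "(1/3::real)^n * (2 * 3^n * real n) / 2 = real n"
      by (simp add: power_divide field_simps)
    ultimately show ?thesis by linarith
  qed
  obtain C where C: "\<And>k. \<bar>integral {a..b} (\<lambda>s. x k s * h s)\<bar> \<le> C"
    using bd[OF hm, of 2] hb by blast
  obtain n :: nat where "C \<le> real n" using real_arch_simple by blast
  moreover have "F n h = integral {a..b} (\<lambda>s. x (kk n) s * h s)" by (simp add: F_def y_def)
  ultimately show False using big[of n] C[of "kk n"] by linarith
qed

lemma ai_abs_int:
  fixes f :: "real \<Rightarrow> real"
  assumes "f absolutely_integrable_on S"
  shows "(\<lambda>s. \<bar>f s\<bar>) integrable_on S" "f integrable_on S"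
  using conjunct2[OF absolutely_integrable_on_def[THEN iffD1, OF assms]]
    conjunct1[OF absolutely_integrable_on_def[THEN iffD1, OF assms]] by simp_all

lemma abs_integral_le:
  fixes f :: "real \<Rightarrow> real"
  assumes "f absolutely_integrable_on S"
  shows "\<bar>integral S f\<bar> \<le> integral S (\<lambda>s. \<bar>f s\<bar>)"
proof -
  have "norm (integral S f) \<le> integral S (\<lambda>s. \<bar>f s\<bar>)"
    by (rule integral_norm_bound_integral[OF ai_abs_int(2)[OF assms] ai_abs_int(1)[OF assms]]) simp
  then show ?thesis by simp
qed

lemma sub_abs_le:
  fixes f :: "real \<Rightarrow> real"
  assumes "f absolutely_integrable_on {0..T}" "r \<in> {0..T}"
  shows "f absolutely_integrable_on {0..r}"
    "integral {0..r} (\<lambda>s. \<bar>f s\<bar>) \<le> integral {0..T} (\<lambda>s. \<bar>f s\<bar>)"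
proof -
  show ar: "f absolutely_integrable_on {0..r}"
    by (rule absolutely_integrable_on_subinterval[OF assms(1)]) (use assms(2) in auto)
  show "integral {0..r} (\<lambda>s. \<bar>f s\<bar>) \<le> integral {0..T} (\<lambda>s. \<bar>f s\<bar>)"
    by (rule integral_subset_le[OF _ ai_abs_int(1)[OF ar] ai_abs_int(1)[OF assms(1)]]) (use assms(2) in auto)
qed

lemma lip_int:
  fixes F :: "real \<Rightarrow> real"
  assumes "continuous_on {0..T} F" "\<And>r. r \<in> {0..T} \<Longrightarrow> \<bar>F r\<bar> \<le> B"
    and "t \<in> {0..T}" "t' \<in> {0..T}"
  shows "\<bar>integral {0..t} F - integral {0..t'} F\<bar> \<le> B * \<bar>t - t'\<bar>"
proof -
  have iF: "F integrable_on {0..T}" by (rule integrable_continuous_interval[OF assms(1)])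
  have gen: "\<bar>integral {0..y} F - integral {0..x} F\<bar> \<le> B * (y - x)"
    if xy: "x \<le> y" "x \<in> {0..T}" "y \<in> {0..T}" for x y
  proof -
    have iy: "F integrable_on {0..y}" by (rule integrable_on_subinterval[OF iF]) (use xy in auto)
    have "integral {0..x} F + integral {x..y} F = integral {0..y} F"
      by (rule Henstock_Kurzweil_Integration.integral_combine[OF _ _ iy]) (use xy in auto)
    then have e: "integral {0..y} F - integral {0..x} F = integral {x..y} F" by simp
    have ixy: "F integrable_on {x..y}" by (rule integrable_on_subinterval[OF iF]) (use xy in auto)
    have "norm (integral {x..y} F) \<le> integral {x..y} (\<lambda>_. B)"
      by (rule integral_norm_bound_integral[OF ixy]) (use xy assms(2) in auto)
    also have "\<dots> = B * (y - x)" using xy(1) by (simp add: content_real)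
    finally show ?thesis unfolding e by simp
  qed
  show ?thesis
  proof (cases "t' \<le> t")
    case True then show ?thesis using gen[of t' t] assms(3,4) by simp
  next
    case False then show ?thesis using gen[of t t'] assms(3,4) by (simp add: abs_minus_commute)
  qed
qed

lemma single:
  fixes v :: "nat \<Rightarrow> real \<Rightarrow> real"
  assumes B0: "B \<ge> 0" and v: "L2m m T v" and vb: "\<And>j. j \<in> {1..m} \<Longrightarrow> integral {0..T} (\<lambda>s. \<bar>v j s\<bar>) \<le> B"
  shows "\<And>j. j \<in> {1..m} \<Longrightarrow> continuous_on {0..T} (\<lambda>r. integral {0..r} (v j))"
    and "\<And>j r. j \<in> {1..m} \<Longrightarrow> r \<in> {0..T} \<Longrightarrow> \<bar>integral {0..r} (v j)\<bar> \<le> B"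
    and "\<And>t. t \<in> {0..T} \<Longrightarrow> piu a b m v t = a + (\<Sum>j=1..m. b j * integral {0..t} (\<lambda>r. integral {0..r} (v j)))"
    and "\<And>t t'. t \<in> {0..T} \<Longrightarrow> t' \<in> {0..T} \<Longrightarrow> \<bar>piu a b m v t - piu a b m v t'\<bar> \<le> (\<Sum>j=1..m. \<bar>b j\<bar>) * B * \<bar>t - t'\<bar>"
    and "\<And>t. t \<in> {0..T} \<Longrightarrow> \<bar>piu a b m v t\<bar> \<le> \<bar>a\<bar> + (\<Sum>j=1..m. \<bar>b j\<bar>) * B * T"
    and "continuous_on {0..T} (piu a b m v)"
proof -
  have vj: "\<And>j. j \<in> {1..m} \<Longrightarrow> v j absolutely_integrable_on {0..T}"
    using v unfolding L2m_def using L2_D(2) by simp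
  show Fc: "\<And>j. j \<in> {1..m} \<Longrightarrow> continuous_on {0..T} (\<lambda>r. integral {0..r} (v j))"
    by (rule indefinite_integral_continuous_1[OF ai_abs_int(2)[OF vj]])
  show Fb: "\<And>j r. j \<in> {1..m} \<Longrightarrow> r \<in> {0..T} \<Longrightarrow> \<bar>integral {0..r} (v j)\<bar> \<le> B"
  proof -
    fix j r assume j: "j \<in> {1..m}" and r: "r \<in> {0..T}"
    have "\<bar>integral {0..r} (v j)\<bar> \<le> integral {0..r} (\<lambda>s. \<bar>v j s\<bar>)"
      by (rule abs_integral_le[OF sub_abs_le(1)[OF vj[OF j] r]])
    also have "\<dots> \<le> integral {0..T} (\<lambda>s. \<bar>v j s\<bar>)" by (rule sub_abs_le(2)[OF vj[OF j] r])
    also have "\<dots> \<le> B" by (rule vb[OF j])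
    finally show "\<bar>integral {0..r} (v j)\<bar> \<le> B" .
  qed
  show pe: "\<And>t. t \<in> {0..T} \<Longrightarrow> piu a b m v t = a + (\<Sum>j=1..m. b j * integral {0..t} (\<lambda>r. integral {0..r} (v j)))"
  proof -
    fix t assume t: "t \<in> {0..T}"
    have "(LINT r:{0..t}|lebesgue. (LINT s:{0..r}|lebesgue. v j s)) = integral {0..t} (\<lambda>r. integral {0..r} (v j))"
      if j: "j \<in> {1..m}" for j
    proof -
      have "(LINT r:{0..t}|lebesgue. (LINT s:{0..r}|lebesgue. v j s)) = (LINT r:{0..t}|lebesgue. integral {0..r} (v j))"
      proof (rule set_lebesgue_integral_cong)
        show "\<forall>r. r \<in> {0..t} \<longrightarrow> (LINT s:{0..r}|lebesgue. v j s) = integral {0..r} (v j)"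
        proof (intro allI impI)
          fix r assume "r \<in> {0..t}"
          then have "r \<in> {0..T}" using t by auto
          then show "(LINT s:{0..r}|lebesgue. v j s) = integral {0..r} (v j)"
            by (rule set_lebesgue_integral_eq_integral(2)[OF sub_abs_le(1)[OF vj[OF j]]])
        qed
      qed simp
      also have "\<dots> = integral {0..t} (\<lambda>r. integral {0..r} (v j))"
      proof (rule set_lebesgue_integral_eq_integral(2))
        have "continuous_on {0..t} (\<lambda>r. integral {0..r} (v j))"
          by (rule continuous_on_subset[OF Fc[OF j]]) (use t in auto)
        then show "(\<lambda>r. integral {0..r} (v j)) absolutely_integrable_on {0..t}"
          by (rule absolutely_integrable_continuous_real)
      qed
      finally show ?thesis .
    qed
    then show "piu a b m v t = a + (\<Sum>j=1..m. b j * integral {0..t} (\<lambda>r. integral {0..r} (v j)))"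
      unfolding piu_def by (intro arg_cong2[where f="(+)"] refl sum.cong) auto
  qed
  show lip: "\<And>t t'. t \<in> {0..T} \<Longrightarrow> t' \<in> {0..T} \<Longrightarrow> \<bar>piu a b m v t - piu a b m v t'\<bar> \<le> (\<Sum>j=1..m. \<bar>b j\<bar>) * B * \<bar>t - t'\<bar>"
  proof -
    fix t t' assume t: "t \<in> {0..T}" and t': "t' \<in> {0..T}"
    have "\<bar>piu a b m v t - piu a b m v t'\<bar> =
        \<bar>\<Sum>j=1..m. b j * (integral {0..t} (\<lambda>r. integral {0..r} (v j)) - integral {0..t'} (\<lambda>r. integral {0..r} (v j)))\<bar>"
      unfolding pe[OF t] pe[OF t'] by (simp add: sum_subtractf right_diff_distrib)
    also have "\<dots> \<le> (\<Sum>j=1..m. \<bar>b j * (integral {0..t} (\<lambda>r. integral {0..r} (v j)) - integral {0..t'} (\<lambda>r. integral {0..r} (v j)))\<bar>)"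
      by (rule sum_abs)
    also have "\<dots> \<le> (\<Sum>j=1..m. \<bar>b j\<bar> * (B * \<bar>t - t'\<bar>))"
    proof (rule sum_mono)
      fix j assume j: "j \<in> {1..m}"
      have "\<bar>integral {0..t} (\<lambda>r. integral {0..r} (v j)) - integral {0..t'} (\<lambda>r. integral {0..r} (v j))\<bar> \<le> B * \<bar>t - t'\<bar>"
        by (rule lip_int[OF Fc[OF j] Fb[OF j] t t'])
      then show "\<bar>b j * (integral {0..t} (\<lambda>r. integral {0..r} (v j)) - integral {0..t'} (\<lambda>r. integral {0..r} (v j)))\<bar> \<le> \<bar>b j\<bar> * (B * \<bar>t - t'\<bar>)"
        unfolding abs_mult by (rule mult_left_mono) simp
    qed
    also have "\<dots> = (\<Sum>j=1..m. \<bar>b j\<bar>) * B * \<bar>t - t'\<bar>" by (simp add: sum_distrib_right mult.assoc)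
    finally show "\<bar>piu a b m v t - piu a b m v t'\<bar> \<le> (\<Sum>j=1..m. \<bar>b j\<bar>) * B * \<bar>t - t'\<bar>" .
  qed
  show "\<And>t. t \<in> {0..T} \<Longrightarrow> \<bar>piu a b m v t\<bar> \<le> \<bar>a\<bar> + (\<Sum>j=1..m. \<bar>b j\<bar>) * B * T"
  proof -
    fix t assume t: "t \<in> {0..T}"
    have T0: "0 \<in> {0..T}" using t by auto
    have p0: "piu a b m v 0 = a" unfolding pe[OF T0] by simp
    have "\<bar>piu a b m v t - piu a b m v 0\<bar> \<le> (\<Sum>j=1..m. \<bar>b j\<bar>) * B * \<bar>t - 0\<bar>" by (rule lip[OF t T0])
    also have "\<dots> \<le> (\<Sum>j=1..m. \<bar>b j\<bar>) * B * T"
    proof (rule mult_left_mono)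
      show "\<bar>t - 0\<bar> \<le> T" using t by auto
      show "0 \<le> (\<Sum>j=1..m. \<bar>b j\<bar>) * B" using B0 by (simp add: sum_nonneg)
    qed
    finally show "\<bar>piu a b m v t\<bar> \<le> \<bar>a\<bar> + (\<Sum>j=1..m. \<bar>b j\<bar>) * B * T" unfolding p0 by linarith
  qed
  show "continuous_on {0..T} (piu a b m v)"
  proof -
    have "continuous_on {0..T} (\<lambda>t. a + (\<Sum>j=1..m. b j * integral {0..t} (\<lambda>r. integral {0..r} (v j))))"
    proof (intro continuous_intros)
      fix j assume j: "j \<in> {1..m}"
      show "continuous_on {0..T} (\<lambda>t. integral {0..t} (\<lambda>r. integral {0..r} (v j)))"
        by (rule indefinite_integral_continuous_1[OF integrable_continuous_interval[OF Fc[OF j]]])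
    qed
    then show ?thesis by (rule continuous_on_cong[THEN iffD1, rotated 2]) (auto simp: pe)
  qed
qed

lemma eta_single:
  fixes v :: "nat \<Rightarrow> real \<Rightarrow> real"
  assumes T0: "T \<ge> 0" and B0: "B \<ge> 0" and v: "L2m m T v" and vb: "\<And>j. j \<in> {1..m} \<Longrightarrow> integral {0..T} (\<lambda>s. \<bar>v j s\<bar>) \<le> B"
    and phc: "continuous_on UNIV \<phi>" and phb: "\<And>s. \<bar>\<phi> s\<bar> \<le> L1" and j: "j \<in> {1..m}"
  shows "\<And>r. r \<in> {0..T} \<Longrightarrow> eta \<phi> a b m j v r = integral {0..r} (\<lambda>s. v j s * \<phi> (piu a b m v s))"
    and "continuous_on {0..T} (eta \<phi> a b m j v)"
    and "\<And>r. r \<in> {0..T} \<Longrightarrow> \<bar>eta \<phi> a b m j v r\<bar> \<le> L1 * B"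
    and "\<And>t. t \<in> {0..T} \<Longrightarrow> rho \<phi> a b m j v t = integral {0..t} (eta \<phi> a b m j v)"
proof -
  have vj: "v j absolutely_integrable_on {0..T}" using v j unfolding L2m_def using L2_D(2) by simp
  have pc: "continuous_on {0..T} (piu a b m v)" by (rule single(6)[OF B0 v vb])
  have psc: "continuous_on {0..T} (\<lambda>s. \<phi> (piu a b m v s))"
    by (rule continuous_on_compose2[OF phc pc]) simp
  have psm: "(\<lambda>s. \<phi> (piu a b m v s)) \<in> borel_measurable (lebesgue_on {0..r})" if r: "r \<in> {0..T}" for r
    by (rule continuous_imp_measurable_on_sets_lebesgue[OF continuous_on_subset[OF psc]]) (use r in auto)
  have pai: "(\<lambda>s. v j s * \<phi> (piu a b m v s)) absolutely_integrable_on {0..r}" if r: "r \<in> {0..T}" for r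
    by (rule prod_ai(1)[OF sub_abs_le(1)[OF vj r] psm[OF r] phb])
  show ee: "\<And>r. r \<in> {0..T} \<Longrightarrow> eta \<phi> a b m j v r = integral {0..r} (\<lambda>s. v j s * \<phi> (piu a b m v s))"
    unfolding eta_def by (rule set_lebesgue_integral_eq_integral(2)[OF pai])
  have "continuous_on {0..T} (\<lambda>r. integral {0..r} (\<lambda>s. v j s * \<phi> (piu a b m v s)))"
    by (rule indefinite_integral_continuous_1[OF set_lebesgue_integral_eq_integral(1)[OF pai]]) (use T0 in auto)
  then show ec: "continuous_on {0..T} (eta \<phi> a b m j v)"
    by (rule continuous_on_cong[THEN iffD1, rotated 2]) (auto simp: ee)
  show "\<And>r. r \<in> {0..T} \<Longrightarrow> \<bar>eta \<phi> a b m j v r\<bar> \<le> L1 * B"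
  proof -
    fix r assume r: "r \<in> {0..T}"
    have L0: "L1 \<ge> 0" using phb[of 0] by linarith
    have "\<bar>eta \<phi> a b m j v r\<bar> \<le> L1 * integral {0..r} (\<lambda>s. \<bar>v j s\<bar>)"
      unfolding ee[OF r] by (rule prod_ai(3)[OF sub_abs_le(1)[OF vj r] psm[OF r] phb])
    also have "\<dots> \<le> L1 * B"
      by (rule mult_left_mono[OF order.trans[OF sub_abs_le(2)[OF vj r] vb[OF j]] L0])
    finally show "\<bar>eta \<phi> a b m j v r\<bar> \<le> L1 * B" .
  qed
  show "\<And>t. t \<in> {0..T} \<Longrightarrow> rho \<phi> a b m j v t = integral {0..t} (eta \<phi> a b m j v)"
    unfolding rho_def
    by (rule set_lebesgue_integral_eq_integral(2)[OF absolutely_integrable_continuous_real[OF continuous_on_subset[OF ec]]]) auto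
qed

lemma unif_conv:
  fixes p :: "nat \<Rightarrow> real \<Rightarrow> real" and q :: "real \<Rightarrow> real"
  assumes C0: "C \<ge> 0" and T0: "T > 0"
    and lp: "\<And>k t t'. t \<in> {0..T} \<Longrightarrow> t' \<in> {0..T} \<Longrightarrow> \<bar>p k t - p k t'\<bar> \<le> C * \<bar>t - t'\<bar>"
    and lq: "\<And>t t'. t \<in> {0..T} \<Longrightarrow> t' \<in> {0..T} \<Longrightarrow> \<bar>q t - q t'\<bar> \<le> C * \<bar>t - t'\<bar>"
    and cv: "\<And>t. t \<in> {0..T} \<Longrightarrow> (\<lambda>k. p k t) \<longlonglongrightarrow> q t"
    and e: "e > 0"
  shows "eventually (\<lambda>k. \<forall>t\<in>{0..T}. \<bar>p k t - q t\<bar> \<le> e) sequentially"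
proof -
  obtain N :: nat where N: "3 * C * T / e < real N" using reals_Archimedean2 by blast
  have "0 \<le> 3 * C * T / e" using C0 T0 e by simp
  then have Npos: "real N > 0" using N by linarith
  define d where "d = T / real N"
  have dpos: "d > 0" using T0 Npos by (simp add: d_def)
  have Cd: "C * d \<le> e / 3"
  proof -
    have "3 * C * T < real N * e" using N e by (simp add: field_simps)
    then have "C * T / real N \<le> e / 3" using Npos by (simp add: field_simps)
    then show ?thesis by (simp add: d_def)
  qed
  define g where "g i = real i * d" for i :: nat
  have ev: "\<forall>i\<in>{0..N}. eventually (\<lambda>k. \<bar>p k (g i) - q (g i)\<bar> < e / 3) sequentially"
  proof
    fix i assume i: "i \<in> {0..N}"
    have "g i \<in> {0..T}"
    proof -
      have "real i \<le> real N" using i by simp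
      then have "real i * d \<le> real N * d" using dpos by (simp add: mult_right_mono)
      also have "real N * d = T" using Npos by (simp add: d_def)
      finally show ?thesis using dpos by (simp add: g_def)
    qed
    then have "(\<lambda>k. p k (g i)) \<longlonglongrightarrow> q (g i)" by (rule cv)
    then have A: "\<forall>\<epsilon>>0. eventually (\<lambda>k. \<bar>p k (g i) - q (g i)\<bar> < \<epsilon>) sequentially"
      unfolding tendsto_iff dist_real_def by simp
    have e3: "e / 3 > 0" using e by simp
    from A[rule_format, OF e3] show "eventually (\<lambda>k. \<bar>p k (g i) - q (g i)\<bar> < e / 3) sequentially" .
  qed
  have "eventually (\<lambda>k. \<forall>i\<in>{0..N}. \<bar>p k (g i) - q (g i)\<bar> < e / 3) sequentially"
    by (rule eventually_ball_finite[OF _ ev]) simp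
  then show ?thesis
  proof (rule eventually_mono)
    fix k assume H: "\<forall>i\<in>{0..N}. \<bar>p k (g i) - q (g i)\<bar> < e / 3"
    show "\<forall>t\<in>{0..T}. \<bar>p k t - q t\<bar> \<le> e"
    proof
      fix t assume t: "t \<in> {0..T}"
      define i where "i = nat \<lfloor>t / d\<rfloor>"
      have td0: "t / d \<ge> 0" using t dpos by simp
      have ri: "real i = of_int \<lfloor>t / d\<rfloor>" using td0 by (simp add: i_def)
      have fl1: "real i \<le> t / d" unfolding ri by (rule of_int_floor_le)
      have fl2: "t / d < real i + 1" unfolding ri by (rule real_of_int_floor_add_one_gt)
      have gi1: "g i \<le> t" using fl1 dpos by (simp add: g_def field_simps)
      have gi2: "t - g i < d" using fl2 dpos by (simp add: g_def field_simps)
      have "t / d \<le> real N" using t Npos dpos by (simp add: d_def field_simps)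
      then have iN: "i \<in> {0..N}" using fl1 by simp
      have gT: "g i \<in> {0..T}" using gi1 t dpos by (simp add: g_def)
      have a1: "\<bar>p k t - p k (g i)\<bar> \<le> C * d"
        using lp[OF t gT, of k] gi1 gi2 C0 by (smt (verit) mult_left_mono)
      have a2: "\<bar>q (g i) - q t\<bar> \<le> C * d"
        using lq[OF gT t] gi1 gi2 C0 by (smt (verit) mult_left_mono)
      have a3: "\<bar>p k (g i) - q (g i)\<bar> < e / 3" using H iN by blast
      show "\<bar>p k t - q t\<bar> \<le> e" using a1 a2 a3 Cd by linarith
    qed
  qed
qed

lemma weak_restr:
  assumes u: "L2m m T u" and U: "\<And>k. L2m m T (U k)" and w: "weak_conv_L2m m T U u" and j: "j \<in> {1..m}"
    and psm: "\<psi> \<in> borel_measurable (lebesgue_on {0..T})" and psb: "\<And>s. s \<in> {0..T} \<Longrightarrow> \<bar>\<psi> s\<bar> \<le> M"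
    and r: "r \<in> {0..T}"
  shows "(\<lambda>k. integral {0..r} (\<lambda>s. U k j s * \<psi> s)) \<longlonglongrightarrow> integral {0..r} (\<lambda>s. u j s * \<psi> s)"
proof -
  define g where "g s = indicator {0..r} s * \<psi> s" for s :: real
  have im: "(indicator {0..r} :: real \<Rightarrow> real) \<in> borel_measurable (lebesgue_on {0..T})"
    by (rule measurable_restrict_space1[OF borel_measurable_indicator]) simp
  have gm: "g \<in> borel_measurable (lebesgue_on {0..T})"
    unfolding g_def by (rule borel_measurable_times[OF im psm])
  have gb: "\<bar>g s\<bar> \<le> \<bar>M\<bar>" if s: "s \<in> {0..T}" for s
  proof -
    have "\<bar>g s\<bar> \<le> \<bar>\<psi> s\<bar>" by (simp add: g_def indicator_def)
    also have "\<dots> \<le> \<bar>M\<bar>" using psb[OF s] by linarith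
    finally show ?thesis .
  qed
  have eq: "integral {0..T} (\<lambda>s. w s * g s) = integral {0..r} (\<lambda>s. w s * \<psi> s)" for w :: "real \<Rightarrow> real"
  proof -
    have fe: "(\<lambda>s. w s * g s) = (\<lambda>s. if s \<in> {0..r} then w s * \<psi> s else 0)"
      by (auto simp: g_def indicator_def)
    have "integral {0..T} (\<lambda>s. w s * g s) = integral ({0..r} \<inter> {0..T}) (\<lambda>s. w s * \<psi> s)"
      unfolding fe by (rule Henstock_Kurzweil_Integration.integral_restrict_Int)
    also have "{0..r} \<inter> {0..T} = {0..r}" using r by auto
    finally show ?thesis .
  qed
  show ?thesis using weak_lim[OF u U w j gm gb] unfolding eq .
qed

theorem lemma2p11:
  fixes m :: nat and T a L1 :: real and b :: "nat \<Rightarrow> real" and \<phi> :: "real \<Rightarrow> real"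
    and U :: "nat \<Rightarrow> nat \<Rightarrow> real \<Rightarrow> real" and u :: "nat \<Rightarrow> real \<Rightarrow> real"
  assumes "T > 0"
    and "continuous_on UNIV \<phi>"
    and "L1 > 0" and "\<And>s. \<bar>\<phi> s\<bar> \<le> L1"
    and "\<And>k. L2m m T (U k)"
    and "L2m m T u"
    and "weak_conv_L2m m T U u"
  shows "\<forall>j\<in>{1..m}.
           (\<forall>r\<in>{0..T}. (\<lambda>k. eta \<phi> a b m j (U k) r) \<longlonglongrightarrow> eta \<phi> a b m j u r)
         \<and> (\<forall>t\<in>{0..T}. (\<lambda>k. rho \<phi> a b m j (U k) t) \<longlonglongrightarrow> rho \<phi> a b m j u t)"
proof -
  note T0 = assms(1) and phc = assms(2) and L0 = assms(3) and phb = assms(4)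
    and U = assms(5) and u = assms(6) and w = assms(7)
  have T0': "T \<ge> 0" using T0 by simp
  have Uj: "U k j absolutely_integrable_on {0..T}" if "j \<in> {1..m}" for k j
    using U[of k] that unfolding L2m_def using L2_D(2) by simp
  have uj: "u j absolutely_integrable_on {0..T}" if "j \<in> {1..m}" for j
    using u that unfolding L2m_def using L2_D(2) by simp
  have ex: "\<exists>B. \<forall>k. integral {0..T} (\<lambda>s. \<bar>U k j s\<bar>) \<le> B" if j: "j \<in> {1..m}" for j
  proof (rule ubp)
    show "\<And>k. U k j absolutely_integrable_on {0..T}" using Uj[OF j] .
    fix g :: "real \<Rightarrow> real" and M
    assume gm: "g \<in> borel_measurable (lebesgue_on {0..T})" and gb: "\<And>s. s \<in> {0..T} \<Longrightarrow> \<bar>g s\<bar> \<le> M"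
    have "(\<lambda>k. integral {0..T} (\<lambda>s. U k j s * g s)) \<longlonglongrightarrow> integral {0..T} (\<lambda>s. u j s * g s)"
      by (rule weak_lim[OF u U w j gm gb])
    then have "Bseq (\<lambda>k. integral {0..T} (\<lambda>s. U k j s * g s))" by (rule convergent_imp_Bseq[OF convergentI])
    then obtain K where "\<And>k. norm (integral {0..T} (\<lambda>s. U k j s * g s)) \<le> K" unfolding Bseq_def by blast
    then show "\<exists>C. \<forall>k. \<bar>integral {0..T} (\<lambda>s. U k j s * g s)\<bar> \<le> C" by (intro exI[of _ K]) simp
  qed
  have "\<forall>j\<in>{1..m}. \<exists>B. \<forall>k. integral {0..T} (\<lambda>s. \<bar>U k j s\<bar>) \<le> B" by (intro ballI ex)
  from bchoice[OF this] obtain Bf where Bf: "\<forall>j\<in>{1..m}. \<forall>k. integral {0..T} (\<lambda>s. \<bar>U k j s\<bar>) \<le> Bf j"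
    by blast
  define B where "B = (\<Sum>j\<in>{1..m}. \<bar>Bf j\<bar> + \<bar>integral {0..T} (\<lambda>s. \<bar>u j s\<bar>)\<bar>)"
  have B0: "B \<ge> 0" unfolding B_def by (rule sum_nonneg) simp
  have term_le: "\<bar>Bf j\<bar> + \<bar>integral {0..T} (\<lambda>s. \<bar>u j s\<bar>)\<bar> \<le> B" if j: "j \<in> {1..m}" for j
    unfolding B_def by (rule member_le_sum[OF j]) simp_all
  have UB: "\<And>j. j \<in> {1..m} \<Longrightarrow> integral {0..T} (\<lambda>s. \<bar>U k j s\<bar>) \<le> B" for k
  proof -
    fix j assume j: "j \<in> {1..m}"
    have "integral {0..T} (\<lambda>s. \<bar>U k j s\<bar>) \<le> Bf j" using Bf j by blast
    then show "integral {0..T} (\<lambda>s. \<bar>U k j s\<bar>) \<le> B"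
      using term_le[OF j] abs_ge_self[of "Bf j"] abs_ge_zero[of "integral {0..T} (\<lambda>s. \<bar>u j s\<bar>)"] by linarith
  qed
  have uB: "\<And>j. j \<in> {1..m} \<Longrightarrow> integral {0..T} (\<lambda>s. \<bar>u j s\<bar>) \<le> B"
  proof -
    fix j assume j: "j \<in> {1..m}"
    show "integral {0..T} (\<lambda>s. \<bar>u j s\<bar>) \<le> B"
      using term_le[OF j] abs_ge_self[of "integral {0..T} (\<lambda>s. \<bar>u j s\<bar>)"] abs_ge_zero[of "Bf j"] by linarith
  qed
  define C where "C = (\<Sum>j=1..m. \<bar>b j\<bar>) * B"
  have C0: "C \<ge> 0" unfolding C_def using B0 by (simp add: sum_nonneg)
  define R where "R = \<bar>a\<bar> + C * T"
  have P1: "(\<lambda>k. integral {0..r} (U k jj)) \<longlonglongrightarrow> integral {0..r} (u jj)" if jj: "jj \<in> {1..m}" and r: "r \<in> {0..T}" for jj r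
    using weak_restr[OF u U w jj borel_measurable_const _ r, of 1 1] by simp
  have P2: "(\<lambda>k. integral {0..t} (\<lambda>r. integral {0..r} (U k jj))) \<longlonglongrightarrow> integral {0..t} (\<lambda>r. integral {0..r} (u jj))"
    if jj: "jj \<in> {1..m}" and t: "t \<in> {0..T}" for jj t
  proof (rule dominated_convergence(2)[where h="\<lambda>_. B"])
    show "(\<lambda>r. integral {0..r} (U k jj)) integrable_on {0..t}" for k
        by (rule integrable_continuous_interval[OF continuous_on_subset[OF single(1)[OF B0 U UB jj]]]) (use t in auto)
      show "(\<lambda>_. B) integrable_on {0..t}" by (rule Henstock_Kurzweil_Integration.integrable_const_ivl)
      fix k x assume x: "x \<in> {0..t}"
      then have xT: "x \<in> {0..T}" using t by auto
      show "norm (integral {0..x} (U k jj)) \<le> B" using single(2)[OF B0 U UB jj xT] by simp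
      show "(\<lambda>k. integral {0..x} (U k jj)) \<longlonglongrightarrow> integral {0..x} (u jj)" by (rule P1[OF jj xT])
  qed
  have P3: "(\<lambda>k. piu a b m (U k) t) \<longlonglongrightarrow> piu a b m u t" if t: "t \<in> {0..T}" for t
  proof -
    have "(\<lambda>k. a + (\<Sum>j=1..m. b j * integral {0..t} (\<lambda>r. integral {0..r} (U k j))))
        \<longlonglongrightarrow> a + (\<Sum>j=1..m. b j * integral {0..t} (\<lambda>r. integral {0..r} (u j)))"
      by (intro tendsto_intros P2 t) simp
    moreover have e1: "\<And>k. piu a b m (U k) t = a + (\<Sum>j=1..m. b j * integral {0..t} (\<lambda>r. integral {0..r} (U k j)))"
      by (rule single(3)[OF B0 U UB t])
    moreover have e2: "piu a b m u t = a + (\<Sum>j=1..m. b j * integral {0..t} (\<lambda>r. integral {0..r} (u j)))"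
      by (rule single(3)[OF B0 u uB t])
    ultimately show ?thesis by (simp only:)
  qed
  have P4: "eventually (\<lambda>k. \<forall>t\<in>{0..T}. \<bar>piu a b m (U k) t - piu a b m u t\<bar> \<le> e) sequentially"
    if e: "e > 0" for e
  proof (rule unif_conv[OF C0 T0 _ _ P3 e])
    show "\<And>k t t'. t \<in> {0..T} \<Longrightarrow> t' \<in> {0..T} \<Longrightarrow> \<bar>piu a b m (U k) t - piu a b m (U k) t'\<bar> \<le> C * \<bar>t - t'\<bar>"
      unfolding C_def by (rule single(4)[OF B0 U UB])
    show "\<And>t t'. t \<in> {0..T} \<Longrightarrow> t' \<in> {0..T} \<Longrightarrow> \<bar>piu a b m u t - piu a b m u t'\<bar> \<le> C * \<bar>t - t'\<bar>"
      unfolding C_def by (rule single(4)[OF B0 u uB])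
  qed
  have PUb: "\<bar>piu a b m (U k) t\<bar> \<le> R" if "t \<in> {0..T}" for k t
    unfolding R_def C_def by (rule single(5)[OF B0 U UB that])
  have Pub: "\<bar>piu a b m u t\<bar> \<le> R" if "t \<in> {0..T}" for t
    unfolding R_def C_def by (rule single(5)[OF B0 u uB that])
  have P5: "eventually (\<lambda>k. \<forall>s\<in>{0..T}. \<bar>\<phi> (piu a b m (U k) s) - \<phi> (piu a b m u s)\<bar> \<le> e) sequentially"
    if e: "e > 0" for e
  proof -
    have "uniformly_continuous_on (cball 0 R) \<phi>"
      by (rule compact_uniformly_continuous[OF continuous_on_subset[OF phc] compact_cball]) simp
    then have "\<forall>e>0. \<exists>d>0. \<forall>x\<in>cball 0 R. \<forall>x'\<in>cball 0 R. dist x' x < d \<longrightarrow> dist (\<phi> x') (\<phi> x) < e"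
      unfolding uniformly_continuous_on_def .
    then obtain d where d: "d > 0" and dd0: "\<forall>x\<in>cball 0 R. \<forall>x'\<in>cball 0 R. dist x' x < d \<longrightarrow> dist (\<phi> x') (\<phi> x) < e"
      using e by blast
    have dd: "\<And>x x'. x \<in> cball 0 R \<Longrightarrow> x' \<in> cball 0 R \<Longrightarrow> dist x' x < d \<Longrightarrow> dist (\<phi> x') (\<phi> x) < e"
      using dd0 by blast
    have d2: "d / 2 > 0" using d by simp
    show ?thesis
    proof (rule eventually_mono[OF P4[OF d2]])
      fix k assume H: "\<forall>t\<in>{0..T}. \<bar>piu a b m (U k) t - piu a b m u t\<bar> \<le> d / 2"
      show "\<forall>s\<in>{0..T}. \<bar>\<phi> (piu a b m (U k) s) - \<phi> (piu a b m u s)\<bar> \<le> e"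
      proof
        fix s assume s: "s \<in> {0..T}"
        have "dist (\<phi> (piu a b m (U k) s)) (\<phi> (piu a b m u s)) < e"
        proof (rule dd)
          show "piu a b m u s \<in> cball 0 R" using Pub[OF s] by (simp add: dist_real_def)
          show "piu a b m (U k) s \<in> cball 0 R" using PUb[OF s] by (simp add: dist_real_def)
          have "\<bar>piu a b m (U k) s - piu a b m u s\<bar> \<le> d / 2" using H s by blast
          then show "dist (piu a b m (U k) s) (piu a b m u s) < d" using d by (simp add: dist_real_def)
        qed
        then show "\<bar>\<phi> (piu a b m (U k) s) - \<phi> (piu a b m u s)\<bar> \<le> e" by (simp add: dist_real_def)
      qed
    qed
  qed
  show ?thesis
  proof
    fix j assume j: "j \<in> {1..m}"
    have P6: "(\<lambda>k. eta \<phi> a b m j (U k) r) \<longlonglongrightarrow> eta \<phi> a b m j u r" if r: "r \<in> {0..T}" for r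
    proof -
      define \<psi> where "\<psi> s = \<phi> (piu a b m u s)" for s
      define \<psi>k where "\<psi>k k s = \<phi> (piu a b m (U k) s)" for k s
      have psc: "continuous_on {0..T} \<psi>" unfolding \<psi>_def
        by (rule continuous_on_compose2[OF phc single(6)[OF B0 u uB] subset_UNIV])
      have pskc: "continuous_on {0..T} (\<psi>k k)" for k unfolding \<psi>k_def
        by (rule continuous_on_compose2[OF phc single(6)[OF B0 U UB] subset_UNIV])
      have psm: "\<psi> \<in> borel_measurable (lebesgue_on {0..T})"
        by (rule continuous_imp_measurable_on_sets_lebesgue[OF psc]) simp
      have psb: "\<And>s. \<bar>\<psi> s\<bar> \<le> L1" by (simp add: \<psi>_def phb)
      have pskb: "\<And>k s. \<bar>\<psi>k k s\<bar> \<le> L1" by (simp add: \<psi>k_def phb)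
      have psmr: "\<psi> \<in> borel_measurable (lebesgue_on {0..r})"
        by (rule continuous_imp_measurable_on_sets_lebesgue[OF continuous_on_subset[OF psc]]) (use r in auto)
      have dc: "continuous_on {0..r} (\<lambda>s. \<psi>k k s - \<psi> s)" for k
        by (intro continuous_on_diff continuous_on_subset[OF psc] continuous_on_subset[OF pskc]) (use r in auto)
      have dm: "(\<lambda>s. \<psi>k k s - \<psi> s) \<in> borel_measurable (lebesgue_on {0..r})" for k
        by (rule continuous_imp_measurable_on_sets_lebesgue[OF dc]) simp
      have Ur: "U k j absolutely_integrable_on {0..r}" for k by (rule sub_abs_le(1)[OF Uj[OF j] r])
      have dbd: "\<And>s. s \<in> {0..r} \<Longrightarrow> \<bar>\<psi>k k s - \<psi> s\<bar> \<le> 2 * L1" for k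
        using pskb[of k] psb by (smt (verit))
      define D where "D k = integral {0..r} (\<lambda>s. U k j s * (\<psi>k k s - \<psi> s))" for k
      have A: "(\<lambda>k. integral {0..r} (\<lambda>s. U k j s * \<psi> s)) \<longlonglongrightarrow> integral {0..r} (\<lambda>s. u j s * \<psi> s)"
        by (rule weak_restr[OF u U w j psm psb r])
      have split: "eta \<phi> a b m j (U k) r = integral {0..r} (\<lambda>s. U k j s * \<psi> s) + D k" for k
      proof -
        have "eta \<phi> a b m j (U k) r = integral {0..r} (\<lambda>s. U k j s * \<psi>k k s)"
          unfolding \<psi>k_def by (rule eta_single(1)[OF T0' B0 U UB phc phb j r])
        also have "(\<lambda>s. U k j s * \<psi>k k s) = (\<lambda>s. U k j s * \<psi> s + U k j s * (\<psi>k k s - \<psi> s))"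
          by (simp add: algebra_simps)
        also have "integral {0..r} \<dots> = integral {0..r} (\<lambda>s. U k j s * \<psi> s) + D k"
          unfolding D_def by (rule integral_add[OF prod_ai(2)[OF Ur psmr psb] prod_ai(2)[OF Ur dm dbd]])
        finally show ?thesis .
      qed
      have eu: "eta \<phi> a b m j u r = integral {0..r} (\<lambda>s. u j s * \<psi> s)"
        unfolding \<psi>_def by (rule eta_single(1)[OF T0' B0 u uB phc phb j r])
      have D0: "D \<longlonglongrightarrow> 0"
        unfolding tendsto_iff dist_real_def
      proof (intro allI impI)
        fix e :: real assume e: "e > 0"
        define e' where "e' = e / (B + 1)"
        have e': "e' > 0" using e B0 by (simp add: e'_def)
        show "eventually (\<lambda>k. \<bar>D k - 0\<bar> < e) sequentially"
        proof (rule eventually_mono[OF P5[OF e']])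
          fix k assume H: "\<forall>s\<in>{0..T}. \<bar>\<phi> (piu a b m (U k) s) - \<phi> (piu a b m u s)\<bar> \<le> e'"
          have Hb: "\<And>s. s \<in> {0..r} \<Longrightarrow> \<bar>\<psi>k k s - \<psi> s\<bar> \<le> e'"
          proof -
            fix s assume "s \<in> {0..r}"
            then have "s \<in> {0..T}" using r by auto
            then show "\<bar>\<psi>k k s - \<psi> s\<bar> \<le> e'" using H unfolding \<psi>k_def \<psi>_def by blast
          qed
          have "\<bar>D k\<bar> \<le> e' * integral {0..r} (\<lambda>s. \<bar>U k j s\<bar>)"
            unfolding D_def by (rule prod_ai(3)[OF Ur dm Hb])
          also have "\<dots> \<le> e' * B"
            by (rule mult_left_mono[OF order.trans[OF sub_abs_le(2)[OF Uj[OF j] r] UB[OF j]]]) (use e' in simp)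
          also have "\<dots> < e"
          proof -
            have "e' * B = e * (B / (B + 1))" by (simp add: e'_def)
            also have "\<dots> < e * 1" using B0 e by (intro mult_strict_left_mono) simp_all
            finally show ?thesis by simp
          qed
          finally show "\<bar>D k - 0\<bar> < e" by simp
        qed
      qed
      have "(\<lambda>k. integral {0..r} (\<lambda>s. U k j s * \<psi> s) + D k) \<longlonglongrightarrow> integral {0..r} (\<lambda>s. u j s * \<psi> s) + 0"
        by (rule tendsto_add[OF A D0])
      then show ?thesis unfolding split eu by simp
    qed
    show "(\<forall>r\<in>{0..T}. (\<lambda>k. eta \<phi> a b m j (U k) r) \<longlonglongrightarrow> eta \<phi> a b m j u r)
         \<and> (\<forall>t\<in>{0..T}. (\<lambda>k. rho \<phi> a b m j (U k) t) \<longlonglongrightarrow> rho \<phi> a b m j u t)"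
    proof (intro conjI ballI)
      fix r assume "r \<in> {0..T}" then show "(\<lambda>k. eta \<phi> a b m j (U k) r) \<longlonglongrightarrow> eta \<phi> a b m j u r" by (rule P6)
    next
      fix t assume t: "t \<in> {0..T}"
      have "(\<lambda>k. integral {0..t} (eta \<phi> a b m j (U k))) \<longlonglongrightarrow> integral {0..t} (eta \<phi> a b m j u)"
      proof (rule dominated_convergence(2)[where h="\<lambda>_. L1 * B"])
        show "eta \<phi> a b m j (U k) integrable_on {0..t}" for k
          by (rule integrable_continuous_interval[OF continuous_on_subset[OF eta_single(2)[OF T0' B0 U UB phc phb j]]])
            (use t in auto)
        show "(\<lambda>_. L1 * B) integrable_on {0..t}" by (rule Henstock_Kurzweil_Integration.integrable_const_ivl)
        fix k x assume x: "x \<in> {0..t}"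
        then have xT: "x \<in> {0..T}" using t by auto
        show "norm (eta \<phi> a b m j (U k) x) \<le> L1 * B"
          using eta_single(3)[OF T0' B0 U UB phc phb j xT] by simp
        show "(\<lambda>k. eta \<phi> a b m j (U k) x) \<longlonglongrightarrow> eta \<phi> a b m j u x" by (rule P6[OF xT])
      qed
      moreover have "\<And>k. rho \<phi> a b m j (U k) t = integral {0..t} (eta \<phi> a b m j (U k))"
        by (rule eta_single(4)[OF T0' B0 U UB phc phb j t])
      moreover have "rho \<phi> a b m j u t = integral {0..t} (eta \<phi> a b m j u)"
        by (rule eta_single(4)[OF T0' B0 u uB phc phb j t])
      ultimately show "(\<lambda>k. rho \<phi> a b m j (U k) t) \<longlonglongrightarrow> rho \<phi> a b m j u t" by (simp only:)
    qed
  qed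
qed

end
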